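(* Under the standing setting and assumptions (A1)–(A3) described in the context, assume $\mathcal A$ is convex and $\mathrm{int}(\mathcal A^\infty)\cap\mathcal M\neq\emptyset$. Then for every $\varepsilon>0$ the map $\mathcal R_\varepsilon$ is lower semicontinuous at every point of $\mathcal X$.
   Context: Let $\mathcal X$ be a Hausdorff, first countable, locally convex topological vector space over $\mathbb R$, partially ordered by a partial order $\geq$ with positive cone $\mathcal X_+=\{X\in\mathcal X: X\geq 0\}$. Let $\mathcal M\subset\mathcal X$ be a vector subspace with $1<\dim\mathcal M<\infty$, carrying the relative topology, and let $\pi:\mathcal M\to\mathbb R$ be linear. Standing assumptions: (A1) there is $U\in\mathcal M\cap\mathcal X_+$ with $\pi(U)=1$; (A2) $\mathcal A\subsetneq\mathcal X$ is closed, contains $0$, and satisfies $\mathcal A+\mathcal X_+\subset\mathcal A$; (A3) the map $\rho(X)=\inf\{\pi(Z): Z\in\mathcal M,\ X+Z\in\mathcal A\}$ is finitely valued and continuous on $\mathcal X$. For $\varepsilon>0$, $\mathcal R_\varepsilon(X)=\{Z\in\mathcal M: X+Z\in\mathcal A,\ \pi(Z)<\rho(X)+\varepsilon\}$. The asymptotic cone is $\mathcal A^\infty=\bigcap_{\delta>0}\mathrm{cl}\{\lambda X:\lambda\in[0,\delta],X\in\mathcal A\}$; $\mathrm{int}$ denotes interior in $\mathcal X$. A set-valued map $\mathcal S:\mathcal X\rightrightarrows\mathcal M$ is lower semicontinuous at $X$ if for every open $\mathcal U\subset\mathcal M$ with $\mathcal S(X)\cap\mathcal U\neq\emptyset$ there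 is an open neighborhood $\mathcal U_X$ of $X$ with $\mathcal S(Y)\cap\mathcal U\neq\emptyset$ for all $Y\in\mathcal U_X$. *)

theory Defs
  imports "HOL-Analysis.Analysis"
begin

definition tvs :: "'a::{real_vector,topological_space} itself \<Rightarrow> bool" where
  "tvs _ \<longleftrightarrow>
     continuous_on UNIV (\<lambda>p::'a \<times> 'a. fst p + snd p) \<and>
     continuous_on UNIV (\<lambda>p::real \<times> 'a. fst p *\<^sub>R snd p)"

definition locally_convex :: "'a::{real_vector,topological_space} itself \<Rightarrow> bool" where
  "locally_convex _ \<longleftrightarrow>
     (\<forall>U::'a set. open U \<and> 0 \<in> U \<longrightarrow> (\<exists>V. open V \<and> convex V \<and> 0 \<in> V \<and> V \<subseteq> U))"

definition positive_cone :: "'a::real_vector set \<Rightarrow> bool" where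
  "positive_cone P \<longleftrightarrow> 0 \<in> P \<and> (\<forall>x\<in>P. \<forall>y\<in>P. x + y \<in> P) \<and>
     (\<forall>c::real. \<forall>x\<in>P. c \<ge> 0 \<longrightarrow> c *\<^sub>R x \<in> P) \<and>
     (\<forall>x. x \<in> P \<and> - x \<in> P \<longrightarrow> x = 0)"

definition linear_on :: "'a::real_vector set \<Rightarrow> ('a \<Rightarrow> real) \<Rightarrow> bool" where
  "linear_on M f \<longleftrightarrow> (\<forall>x\<in>M. \<forall>y\<in>M. f (x + y) = f x + f y) \<and>
     (\<forall>c. \<forall>x\<in>M. f (c *\<^sub>R x) = c * f x)"

definition rho :: "'a::real_vector set \<Rightarrow> ('a \<Rightarrow> real) \<Rightarrow> 'a set \<Rightarrow> 'a \<Rightarrow> real" where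
  "rho M \<pi> A X = Inf {\<pi> Z | Z. Z \<in> M \<and> X + Z \<in> A}"

definition rho_finite :: "'a::real_vector set \<Rightarrow> ('a \<Rightarrow> real) \<Rightarrow> 'a set \<Rightarrow> bool" where
  "rho_finite M \<pi> A \<longleftrightarrow> (\<forall>X. {\<pi> Z | Z. Z \<in> M \<and> X + Z \<in> A} \<noteq> {} \<and>
                                 bdd_below {\<pi> Z | Z. Z \<in> M \<and> X + Z \<in> A})"

definition R_eps :: "'a::real_vector set \<Rightarrow> ('a \<Rightarrow> real) \<Rightarrow> 'a set \<Rightarrow> real \<Rightarrow> 'a \<Rightarrow> 'a set" where
  "R_eps M \<pi> A \<epsilon> X = {Z \<in> M. X + Z \<in> A \<and> \<pi> Z < rho M \<pi> A X + \<epsilon>}"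

definition asymp_cone :: "'a::{real_vector,topological_space} set \<Rightarrow> 'a set" where
  "asymp_cone A = (\<Inter>\<delta>\<in>{\<delta>::real. \<delta> > 0}. closure {l *\<^sub>R X | l X. l \<in> {0..\<delta>} \<and> X \<in> A})"

definition lsc_at :: "'b set \<Rightarrow> ('a::topological_space \<Rightarrow> 'b::topological_space set) \<Rightarrow> 'a \<Rightarrow> bool" where
  "lsc_at M S X \<longleftrightarrow> (\<forall>U. openin (top_of_set M) U \<and> S X \<inter> U \<noteq> {} \<longrightarrow>
      (\<exists>V. open V \<and> X \<in> V \<and> (\<forall>Y\<in>V. S Y \<inter> U \<noteq> {})))"

end

theory Submission
  imports Defs
begin

lemma tvs_add:
  fixes f g :: "'b::topological_space \<Rightarrow> 'a::{real_vector,topological_space}"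
  assumes "tvs TYPE('a)" "continuous_on S f" "continuous_on S g"
  shows "continuous_on S (\<lambda>x. f x + g x)"
proof -
  have c: "continuous_on UNIV (\<lambda>p::'a \<times> 'a. fst p + snd p)" using assms(1) unfolding tvs_def by blast
  have "continuous_on S ((\<lambda>p::'a \<times> 'a. fst p + snd p) \<circ> (\<lambda>x. (f x, g x)))"
    by (rule continuous_on_compose[OF continuous_on_Pair[OF assms(2,3)]])
       (rule continuous_on_subset[OF c], simp)
  then show ?thesis by (simp add: o_def)
qed

lemma tvs_scale:
  fixes f :: "'b::topological_space \<Rightarrow> real" and g :: "'b \<Rightarrow> 'a::{real_vector,topological_space}"
  assumes "tvs TYPE('a)" "continuous_on S f" "continuous_on S g"
  shows "continuous_on S (\<lambda>x. f x *\<^sub>R g x)"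
proof -
  have c: "continuous_on UNIV (\<lambda>p::real \<times> 'a. fst p *\<^sub>R snd p)" using assms(1) unfolding tvs_def by blast
  have "continuous_on S ((\<lambda>p::real \<times> 'a. fst p *\<^sub>R snd p) \<circ> (\<lambda>x. (f x, g x)))"
    by (rule continuous_on_compose[OF continuous_on_Pair[OF assms(2,3)]])
       (rule continuous_on_subset[OF c], simp)
  then show ?thesis by (simp add: o_def)
qed

lemma rec_lemma:
  fixes A :: "'a::{real_vector,topological_space} set"
  assumes tvs: "tvs TYPE('a)" and cl: "closed A" and cv: "convex A"
    and a: "a \<in> A" and d: "d \<in> asymp_cone A" and t: "t \<ge> 0"
  shows "a + t *\<^sub>R d \<in> A"
proof (rule ccontr)
  assume nA: "a + t *\<^sub>R d \<notin> A"
  then have tpos: "t > 0" using a t by (cases "t = 0") auto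
  define f where "f = (\<lambda>p::real \<times> 'a. a + t *\<^sub>R snd p + (- (fst p * t)) *\<^sub>R a)"
  have cf: "continuous_on UNIV f"
    unfolding f_def
    by (intro tvs_add[OF tvs] tvs_scale[OF tvs] continuous_on_const continuous_on_snd
        continuous_on_minus continuous_on_mult continuous_on_fst continuous_on_id)
  have "open (f -` (- A) \<inter> UNIV)"
    using cf cl continuous_on_open_vimage[of UNIV f] by (simp add: open_Compl)
  moreover have "(0, d) \<in> f -` (- A) \<inter> UNIV" using nA by (simp add: f_def)
  ultimately obtain S B where SB: "open S" "open B" "(0,d) \<in> S \<times> B" "S \<times> B \<subseteq> f -` (- A)"
    by (metis open_prod_elim inf_top_right)
  obtain e where e: "e > 0" "ball 0 e \<subseteq> S" using SB open_contains_ball by force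
  define \<delta> where "\<delta> = min (e/2) (1/t)"
  have \<delta>: "\<delta> > 0" using e tpos by (simp add: \<delta>_def)
  have "d \<in> closure {l *\<^sub>R X | l X. l \<in> {0..\<delta>} \<and> X \<in> A}"
    using d \<delta> unfolding asymp_cone_def by blast
  then have "B \<inter> {l *\<^sub>R X | l X. l \<in> {0..\<delta>} \<and> X \<in> A} \<noteq> {}"
    using SB open_Int_closure_eq_empty[of B] by blast
  then obtain l X where lX: "l \<in> {0..\<delta>}" "X \<in> A" "l *\<^sub>R X \<in> B" by blast
  have "l \<in> ball 0 e" using lX e by (auto simp: \<delta>_def dist_real_def)
  then have "(l, l *\<^sub>R X) \<in> S \<times> B" using e lX by auto
  then have out: "f (l, l *\<^sub>R X) \<notin> A" using SB by auto
  have lt: "0 \<le> l * t" "l * t \<le> 1" using lX tpos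
  proof -
    have "l \<le> 1/t" using lX by (simp add: \<delta>_def)
    then show "0 \<le> l * t" "l * t \<le> 1" using lX tpos by (simp_all add: pos_le_divide_eq)
  qed
  have "f (l, l *\<^sub>R X) = (1 - l * t) *\<^sub>R a + (l * t) *\<^sub>R X"
    by (simp add: f_def algebra_simps)
  moreover have "(1 - l * t) *\<^sub>R a + (l * t) *\<^sub>R X \<in> A"
    using convexD[OF cv a lX(2), of "1 - l*t" "l*t"] lt by simp
  ultimately show False using out by simp
qed

theorem mainTheorem20:
  fixes P :: "'a::{real_vector, t2_space, first_countable_topology} set"
    and M :: "'a set" and \<pi> :: "'a \<Rightarrow> real" and A :: "'a set"
  assumes tvs: "tvs TYPE('a)"
    and lc: "locally_convex TYPE('a)"
    and cone: "positive_cone P"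
    and M_sub: "subspace M"
    and M_fin: "\<exists>B. finite B \<and> span B = M"
    and M_dim: "dim M > 1"
    and pi_lin: "linear_on M \<pi>"
    and A1: "\<exists>U\<in>M \<inter> P. \<pi> U = 1"
    and A2: "closed A" "0 \<in> A" "A \<noteq> UNIV" "\<forall>X\<in>A. \<forall>Y\<in>P. X + Y \<in> A"
    and A3: "rho_finite M \<pi> A" "continuous_on UNIV (rho M \<pi> A)"
    and conv: "convex A"
    and int: "interior (asymp_cone A) \<inter> M \<noteq> {}"
  shows "\<forall>\<epsilon>>0. \<forall>X. lsc_at M (R_eps M \<pi> A \<epsilon>) X"
proof (intro allI impI)
  fix \<epsilon> :: real and X :: 'a
  assume eps: "\<epsilon> > 0"
  obtain W where W: "W \<in> interior (asymp_cone A)" "W \<in> M" using int by blast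
  show "lsc_at M (R_eps M \<pi> A \<epsilon>) X"
    unfolding lsc_at_def
  proof (intro allI impI, elim conjE)
    fix U assume U: "openin (top_of_set M) U" and ne: "R_eps M \<pi> A \<epsilon> X \<inter> U \<noteq> {}"
    obtain Z where Z: "Z \<in> M" "X + Z \<in> A" "\<pi> Z < rho M \<pi> A X + \<epsilon>" "Z \<in> U"
      using ne unfolding R_eps_def by blast
    obtain Op where Op: "open Op" "U = Op \<inter> M" using U by (auto simp: openin_open)
    define s where "s = rho M \<pi> A X + \<epsilon> - \<pi> Z"
    have s: "s > 0" using Z by (simp add: s_def)
    define g where "g = (\<lambda>l::real. Z + l *\<^sub>R W)"
    have cg: "continuous_on UNIV g" unfolding g_def
      by (intro tvs_add[OF tvs] tvs_scale[OF tvs] continuous_on_const continuous_on_id)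
    have o1: "open (g -` Op)" using cg Op continuous_on_open_vimage[of UNIV g] by simp
    have o2: "0 \<in> g -` Op" using Z Op by (simp add: g_def)
    have "\<exists>e>0. ball 0 e \<subseteq> g -` Op" using open_contains_ball[of "g -` Op"] o1 o2 by blast
    then obtain e where e: "e > 0" "ball 0 e \<subseteq> g -` Op" by blast
    define l where "l = min (e/2) (s / (2 * (\<bar>\<pi> W\<bar> + 1)))"
    have l: "l > 0" using e s by (simp add: l_def)
    have "l \<in> ball 0 e" using l e by (simp add: l_def dist_real_def)
    then have gO: "Z + l *\<^sub>R W \<in> Op" using e by (auto simp: g_def)
    have ZM: "Z + l *\<^sub>R W \<in> M" using Z W M_sub by (simp add: subspace_add subspace_scale)
    have piZ: "\<pi> (Z + l *\<^sub>R W) = \<pi> Z + l * \<pi> W"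
      using pi_lin Z W M_sub unfolding linear_on_def by (simp add: subspace_scale)
    have "l * \<bar>\<pi> W\<bar> \<le> s/2"
    proof -
      have "l \<le> s / (2 * (\<bar>\<pi> W\<bar> + 1))" by (simp add: l_def)
      then have "l * (\<bar>\<pi> W\<bar> + 1) \<le> s/2" by (simp add: pos_le_divide_eq algebra_simps)
      then show ?thesis using l by (simp add: algebra_simps)
    qed
    moreover have "l * \<pi> W \<le> l * \<bar>\<pi> W\<bar>" using l by (intro mult_left_mono) auto
    ultimately have lpi: "l * \<pi> W < s" using s by linarith
    define h where "h = (\<lambda>Y. W + (1/l) *\<^sub>R Y + (- (1/l)) *\<^sub>R X)"
    have ch: "continuous_on UNIV h" unfolding h_def
      by (intro tvs_add[OF tvs] tvs_scale[OF tvs] continuous_on_const continuous_on_id)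
    define V where "V = {Y. rho M \<pi> A X - (s - l * \<pi> W) < rho M \<pi> A Y} \<inter> (h -` interior (asymp_cone A) \<inter> UNIV)"
    have "open V" unfolding V_def
      using ch continuous_on_open_vimage[of UNIV h]
      by (intro open_Int open_Collect_less continuous_on_const A3(2)) auto
    moreover have "X \<in> V" unfolding V_def using lpi W by (simp add: h_def)
    moreover have "\<forall>Y\<in>V. R_eps M \<pi> A \<epsilon> Y \<inter> U \<noteq> {}"
    proof
      fix Y assume Y: "Y \<in> V"
      have hY: "h Y \<in> asymp_cone A" using Y interior_subset unfolding V_def by blast
      have "(X + Z) + l *\<^sub>R h Y \<in> A"
        by (rule rec_lemma[OF tvs A2(1) conv Z(2) hY]) (use l in simp)
      moreover have "(X + Z) + l *\<^sub>R h Y = Y + (Z + l *\<^sub>R W)"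
        using l by (simp add: h_def algebra_simps)
      ultimately have inA: "Y + (Z + l *\<^sub>R W) \<in> A" by simp
      have "\<pi> (Z + l *\<^sub>R W) < rho M \<pi> A Y + \<epsilon>"
        using Y piZ unfolding V_def s_def by simp
      then have "Z + l *\<^sub>R W \<in> R_eps M \<pi> A \<epsilon> Y \<inter> U"
        using inA ZM gO Op unfolding R_eps_def by simp
      then show "R_eps M \<pi> A \<epsilon> Y \<inter> U \<noteq> {}" by blast
    qed
    ultimately show "\<exists>V. open V \<and> X \<in> V \<and> (\<forall>Y\<in>V. R_eps M \<pi> A \<epsilon> Y \<inter> U \<noteq> {})" by blast
  qed
qed

end
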